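(* Let $n\ge 1$. The cyclic group $\mathbb{Z}_n$ is code-perfect if and only if $n$ is odd, or $n=2d$ where $d=2$ or $d$ is odd.
   Context: For a subgroup $H$ of a finite abelian group $A$ (written additively with identity $0$), the subgroup sum graph $\Gamma_{A,H}$ is the simple undirected graph with vertex set $A$ in which distinct vertices $x,y$ are adjacent if and only if $x+y\in H\setminus\{0\}$. A perfect code in a graph is a set $C$ of vertices that is independent and such that every vertex not in $C$ is adjacent to exactly one vertex of $C$. A finite group $G$ is code-perfect if $\Gamma_{G,H}$ admits a perfect code for every normal subgroup $H$ of $G$. *)

theory Defs
  imports "HOL-Algebra.Algebra"
begin

text \<open>Subgroup sum graph: vertex set the carrier of G; distinct x, y adjacent iff
  x \<otimes> y \<in> H - {\<one>} (the group operation written additively in the paper).\<close>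
definition sum_graph_adj :: "('a, 'b) monoid_scheme \<Rightarrow> 'a set \<Rightarrow> 'a \<Rightarrow> 'a \<Rightarrow> bool" where
  "sum_graph_adj G H x y \<longleftrightarrow>
     x \<in> carrier G \<and> y \<in> carrier G \<and> x \<noteq> y \<and> x \<otimes>\<^bsub>G\<^esub> y \<in> H - {\<one>\<^bsub>G\<^esub>}"

definition perfect_code :: "('a, 'b) monoid_scheme \<Rightarrow> 'a set \<Rightarrow> 'a set \<Rightarrow> bool" where
  "perfect_code G H C \<longleftrightarrow>
     C \<subseteq> carrier G \<and>
     (\<forall>x\<in>C. \<forall>y\<in>C. \<not> sum_graph_adj G H x y) \<and>
     (\<forall>v \<in> carrier G - C. \<exists>!c. c \<in> C \<and> sum_graph_adj G H v c)"

definition code_perfect :: "('a, 'b) monoid_scheme \<Rightarrow> bool" where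
  "code_perfect G \<longleftrightarrow> (\<forall>H. H \<lhd> G \<longrightarrow> (\<exists>C. perfect_code G H C))"

end

theory Submission
  imports Defs
begin

lemma P_add:
  assumes sg: "subgroup H (integer_mod_group n)" and "x mod int n \<in> H" "y mod int n \<in> H"
  shows "(x + y) mod int n \<in> H"
proof -
  have "(x mod int n) \<otimes>\<^bsub>integer_mod_group n\<^esub> (y mod int n) \<in> H"
    using subgroup.m_closed[OF sg assms(2,3)] .
  then show ?thesis by (simp add: mod_add_eq)
qed

lemma P_neg:
  assumes sg: "subgroup H (integer_mod_group n)" and "x mod int n \<in> H"
  shows "(- x) mod int n \<in> H"
proof -
  have c: "x mod int n \<in> carrier (integer_mod_group n)"
    using subgroup.subset[OF sg] assms(2) by blast
  have "inv\<^bsub>integer_mod_group n\<^esub> (x mod int n) \<in> H"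
    using subgroup.m_inv_closed[OF sg assms(2)] .
  then show ?thesis using c by (simp add: mod_minus_eq)
qed

lemma P_zero:
  assumes sg: "subgroup H (integer_mod_group n)"
  shows "0 \<in> H"
  using subgroup.one_closed[OF sg] by simp

lemma P_nat_mult:
  assumes sg: "subgroup H (integer_mod_group n)" and "x mod int n \<in> H"
  shows "(int m * x) mod int n \<in> H"
proof (induction m)
  case 0 then show ?case using P_zero[OF sg] by simp
next
  case (Suc m)
  have "(int m * x + x) mod int n \<in> H" by (rule P_add[OF sg Suc assms(2)])
  then show ?case by (simp add: algebra_simps)
qed

lemma dvd_range_eq:
  fixes a b N :: int
  assumes "0 \<le> a" "a < N" "0 \<le> b" "b < N" "N dvd a - b"
  shows "a = b"
proof -
  have "a mod N = b mod N" using assms(5) by (simp add: mod_eq_dvd_iff)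
  then show ?thesis using assms(1-4) by simp
qed

lemma adj_iff:
  assumes "n \<ge> 1"
  shows "sum_graph_adj (integer_mod_group n) H x y \<longleftrightarrow>
    x \<in> {0..<int n} \<and> y \<in> {0..<int n} \<and> x \<noteq> y \<and> (x+y) mod int n \<in> H \<and> (x+y) mod int n \<noteq> 0"
  using assms by (auto simp: sum_graph_adj_def carrier_integer_mod_group)


lemma suff:
  fixes n :: nat and H :: "int set"
  assumes n: "n \<ge> 1" and sg: "subgroup H (integer_mod_group n)"
  and hyp: "\<And>a. (2*a) mod int n \<in> H \<Longrightarrow>
     (\<exists>x. (x - a) mod int n \<in> H \<and> (2*x) mod int n = 0) \<or> (\<forall>u\<in>H. \<forall>v\<in>H. \<forall>w\<in>H. u = v \<or> u = w \<or> v = w)"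
  shows "\<exists>C. perfect_code (integer_mod_group n) H C"
proof -
  define N where "N = int n"
  have Npos: "N > 0" using n N_def by simp
  define P where "P x \<longleftrightarrow> x mod N \<in> H" for x
  have Padd: "P (x + y)" if "P x" "P y" for x y using P_add[OF sg] that P_def N_def by simp
  have Pneg: "P (- x)" if "P x" for x using P_neg[OF sg] that P_def N_def by simp
  have Pdiff: "P (x - y)" if "P x" "P y" for x y using Padd[OF that(1) Pneg[OF that(2)]] by simp
  have Pcong: "P x = P y" if "x mod N = y mod N" for x y using that P_def by simp
  have P0: "P 0" using P_zero[OF sg] P_def by simp
  have PN: "P N" using P0 Pcong[of N 0] by simp
  have Hiff: "h \<in> H \<longleftrightarrow> P h" if "h \<in> {0..<N}" for h using that P_def by simp
  have Hsub: "H \<subseteq> {0..<N}" using subgroup.subset[OF sg] n N_def by (simp add: carrier_integer_mod_group)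
  define U where "U c = {y \<in> {0..<N}. P (y - c) \<or> P (y + c)}" for c
  define q where "q S = (if \<exists>x\<in>S. (2*x) mod N = 0 then SOME x. x \<in> S \<and> (2*x) mod N = 0 else SOME x. x \<in> S)" for S
  define C where "C = {c \<in> {0..<N}. c = q (U c) \<or> (-c) mod N = q (U c)}"
  have Urefl: "c \<in> U c" if "c \<in> {0..<N}" for c using that P0 U_def by simp
  have Ueq: "U y = U c" if "y \<in> U c" for y c
  proof -
    have yc: "P (y - c) \<or> P (y + c)" using that U_def by simp
    have "P (z - y) \<or> P (z + y) \<longleftrightarrow> P (z - c) \<or> P (z + c)" for z
    proof (cases "P (y - c)")
      case True
      have 1: "P (z - y)" if "P (z - c)" using Pdiff[OF that True] by simp
      have 2: "P (z + y)" if "P (z + c)" using Padd[OF that True] by simp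
      have 3: "P (z - c)" if "P (z - y)" using Padd[OF that True] by simp
      have 4: "P (z + c)" if "P (z + y)" using Pdiff[OF that True] by simp
      show ?thesis using 1 2 3 4 by blast
    next
      case False
      then have T: "P (y + c)" using yc by simp
      have 1: "P (z - y)" if "P (z + c)" using Pdiff[OF that T] by simp
      have 2: "P (z + y)" if "P (z - c)" using Padd[OF that T] by simp
      have 3: "P (z - c)" if "P (z + y)" using Pdiff[OF that T] by simp
      have 4: "P (z + c)" if "P (z - y)" using Padd[OF that T] by simp
      show ?thesis using 1 2 3 4 by blast
    qed
    then have "z \<in> U y \<longleftrightarrow> z \<in> U c" for z unfolding U_def mem_Collect_eq by blast
    then show ?thesis by blast
  qed
  have Qmem: "q (U c) \<in> U c" if "c \<in> {0..<N}" for c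
  proof (cases "\<exists>x\<in>U c. (2*x) mod N = 0")
    case True
    then have ex: "\<exists>x. x \<in> U c \<and> (2*x) mod N = 0" by (simp only: Bex_def)
    have qe: "q (U c) = (SOME x. x \<in> U c \<and> (2*x) mod N = 0)" using True unfolding q_def by (simp only: if_True)
    show ?thesis using someI_ex[OF ex] qe by (simp only:)
  next
    case False
    have ex: "\<exists>x. x \<in> U c" using Urefl[OF that] by (rule exI)
    have qe: "q (U c) = (SOME x. x \<in> U c)" using False unfolding q_def by (simp only: if_False)
    show ?thesis using someI_ex[OF ex] qe by (simp only:)
  qed
  have Q2: "(2 * q (U c)) mod N = 0" if "x \<in> U c" "(2*x) mod N = 0" for c x
  proof -
    have T: "\<exists>x\<in>U c. (2*x) mod N = 0" using that(2,1) by (rule bexI)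
    then have ex: "\<exists>x. x \<in> U c \<and> (2*x) mod N = 0" by (simp only: Bex_def)
    have qe: "q (U c) = (SOME x. x \<in> U c \<and> (2*x) mod N = 0)" using T unfolding q_def by (simp only: if_True)
    show ?thesis using someI_ex[OF ex] qe by (simp only:)
  qed
  have adj: "sum_graph_adj (integer_mod_group n) H x y \<longleftrightarrow>
    x \<in> {0..<N} \<and> y \<in> {0..<N} \<and> x \<noteq> y \<and> P (x+y) \<and> (x+y) mod N \<noteq> 0" for x y
    using adj_iff[OF n] P_def N_def by simp
  have Cchar: "c \<in> C \<longleftrightarrow> c \<in> {0..<N} \<and> (c = q (U c) \<or> c = (- q (U c)) mod N)" for c
  proof -
    have "(-c) mod N = q (U c) \<longleftrightarrow> c = (- q (U c)) mod N" if "c \<in> {0..<N}"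
    proof -
      have qr: "q (U c) \<in> {0..<N}" using Qmem[OF that] U_def by auto
      show ?thesis
      proof
        assume "(-c) mod N = q (U c)"
        then have "(- ((-c) mod N)) mod N = (- q (U c)) mod N" by simp
        then show "c = (- q (U c)) mod N" using that by (simp add: mod_minus_eq)
      next
        assume "c = (- q (U c)) mod N"
        then have "(-c) mod N = (- ((- q (U c)) mod N)) mod N" by simp
        then show "(-c) mod N = q (U c)" using qr by (simp add: mod_minus_eq)
      qed
    qed
    then show ?thesis unfolding C_def by auto
  qed
  have indep: "\<not> sum_graph_adj (integer_mod_group n) H x y" if "x \<in> C" "y \<in> C" for x y
  proof
    assume a: "sum_graph_adj (integer_mod_group n) H x y"
    then have xr: "x \<in> {0..<N}" and yr: "y \<in> {0..<N}" and ne: "x \<noteq> y" and Pxy: "P (x+y)"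
      and nz: "(x+y) mod N \<noteq> 0" using adj by auto
    have "y \<in> U x" using yr Pxy U_def by (simp add: add.commute)
    then have UU: "U y = U x" by (rule Ueq)
    define r where "r = q (U x)"
    have rr: "r \<in> {0..<N}" using Qmem[OF xr] U_def r_def by auto
    have "x = r \<or> x = (- r) mod N" using that(1) Cchar r_def by simp
    moreover have "y = r \<or> y = (- r) mod N" using that(2) Cchar r_def UU by simp
    ultimately have "(x + y) mod N = (r + (- r) mod N) mod N" using ne by (auto simp: add.commute)
    also have "\<dots> = 0" by (simp add: mod_add_right_eq)
    finally show False using nz by simp
  qed
  have uniq: "\<exists>!c. c \<in> C \<and> sum_graph_adj (integer_mod_group n) H v c" if vr: "v \<in> {0..<N}" and vC: "v \<notin> C" for v
  proof -
    define r where "r = q (U v)"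
    define r' where "r' = (- r) mod N"
    have rU: "r \<in> U v" using Qmem[OF vr] r_def by simp
    have rr: "r \<in> {0..<N}" using rU U_def by auto
    have r'r: "r' \<in> {0..<N}" using r'_def Npos by simp
    have Prr': "P (r + r')" using P0 Pcong[of "r + r'" 0] r'_def by (simp add: mod_add_right_eq)
    have r'U: "r' \<in> U r" using r'r Prr' U_def by (simp add: add.commute)
    have Ur: "U r = U v" using Ueq[OF rU] .
    have r'Uv: "r' \<in> U v" using r'U Ur by simp
    have rC: "r \<in> C" using Cchar rr Ur r_def by simp
    have r'C: "r' \<in> C" using Cchar r'r Ueq[OF r'Uv] r_def r'_def by simp
    have vnr: "v \<noteq> r" "v \<noteq> r'" using vC rC r'C by auto
    have sub: "c = r \<or> c = r'" if "c \<in> C" "sum_graph_adj (integer_mod_group n) H v c" for c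
    proof -
      have cr: "c \<in> {0..<N}" and Pvc: "P (v + c)" using that(2) adj by auto
      have "c \<in> U v" using cr Pvc U_def by (simp add: add.commute)
      then have "U c = U v" by (rule Ueq)
      then show ?thesis using that(1) Cchar r_def r'_def by auto
    qed
    have vr0: "(v + r) mod N \<noteq> 0"
    proof
      assume "(v + r) mod N = 0"
      moreover have "(v - r') mod N = (v + r) mod N" unfolding r'_def by (simp add: mod_diff_right_eq)
      ultimately have "(v - r') mod N = 0" by simp
      then have "N dvd v - r'" by (simp only: dvd_eq_mod_eq_0)
      then have "v = r'" using vr r'r by (intro dvd_range_eq) auto
      then show False using vnr(2) by simp
    qed
    have vr'0: "(v + r') mod N \<noteq> 0"
    proof
      assume "(v + r') mod N = 0"
      then have "(v + (- r)) mod N = 0" using r'_def by (simp add: mod_add_right_eq)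
      then have "N dvd v - r" by (simp add: dvd_eq_mod_eq_0)
      then have "v = r" using vr rr by (intro dvd_range_eq) auto
      then show False using vnr(1) by simp
    qed
    have Pvr': "P (v + r') = P (v - r)" by (rule Pcong) (simp add: r'_def mod_add_right_eq)
    have key: "(sum_graph_adj (integer_mod_group n) H v r \<and> \<not> sum_graph_adj (integer_mod_group n) H v r') \<or>
               (sum_graph_adj (integer_mod_group n) H v r' \<and> \<not> sum_graph_adj (integer_mod_group n) H v r) \<or>
               (r = r' \<and> sum_graph_adj (integer_mod_group n) H v r)"
    proof (cases "r = r'")
      case True
      have "P (r - v) \<or> P (r + v)" using rU U_def by simp
      then have "P (v + r)"
        using True Pvr' Pneg[of "r - v"] by (auto simp: add.commute)
      then show ?thesis using True adj vr rr vnr vr0 by auto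
    next
      case False
      have "P (r - v) \<or> P (r + v)" using rU U_def by simp
      have A: "\<not> (P (v + r) \<and> P (v - r))"
      proof
        assume both: "P (v + r) \<and> P (v - r)"
        have P2v: "P (2 * v)" using Padd[of "v + r" "v - r"] both by simp
        have P2r: "P (2 * r)" using Pdiff[of "v + r" "v - r"] both by simp
        have "(2*v) mod int n \<in> H" using P2v unfolding P_def N_def .
        have "(\<exists>x. P (x - v) \<and> (2*x) mod N = 0) \<or> (\<forall>u\<in>H. \<forall>v\<in>H. \<forall>w\<in>H. u = v \<or> u = w \<or> v = w)"
          using hyp[OF \<open>(2*v) mod int n \<in> H\<close>] unfolding P_def N_def .
        then show False
        proof
          assume "\<exists>x. P (x - v) \<and> (2*x) mod N = 0"
          then obtain x where x0: "P (x - v) \<and> (2*x) mod N = 0" ..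
          have x: "P (x - v)" "(2*x) mod N = 0" using x0 by simp_all
          have "x mod N \<in> U v" using x(1) Pcong[of "x mod N - v" "x - v"] U_def Npos
            by (simp add: mod_diff_left_eq)
          moreover have "(2 * (x mod N)) mod N = 0" using x(2) by (simp add: mod_mult_right_eq)
          ultimately have "(2 * q (U v)) mod N = 0" by (rule Q2)
          then have "N dvd 2 * r" unfolding r_def by (simp add: dvd_eq_mod_eq_0)
          then have "N dvd - (2 * r)" by (simp only: dvd_minus_iff)
          then have "(- (2 * r)) mod N = 0" by (simp only: dvd_eq_mod_eq_0)
          moreover have "(r' - r) mod N = (- (2 * r)) mod N" unfolding r'_def by (simp add: mod_diff_left_eq)
          ultimately have "(r' - r) mod N = 0" by simp
          then have "N dvd r' - r" by (simp only: dvd_eq_mod_eq_0)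
          then have "r' = r" using rr r'r by (intro dvd_range_eq) auto
          then show False using False by simp
        next
          assume nt: "\<forall>u\<in>H. \<forall>v\<in>H. \<forall>w\<in>H. u = v \<or> u = w \<or> v = w"
          have "P (r - v)" using Pdiff[of "v + r" "2 * v"] both P2v by (simp add: algebra_simps)
          have "P (r' - v)" using Pcong[of "r' - v" "- (v + r)"] Pneg[of "v + r"] both r'_def
            by (simp add: mod_diff_left_eq mod_minus_eq algebra_simps)
          define u1 where "u1 = (r - v) mod N"
          define u2 where "u2 = (r' - v) mod N"
          have u1H: "u1 \<in> H" using \<open>P (r - v)\<close> P_def u1_def by simp
          have u2H: "u2 \<in> H" using \<open>P (r' - v)\<close> P_def u2_def by simp
          have "u1 \<noteq> 0"
          proof
            assume "u1 = 0"
            then have "N dvd r - v" unfolding u1_def by (simp only: dvd_eq_mod_eq_0)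
            then have "r = v" using vr rr by (intro dvd_range_eq) auto
            then show False using vnr(1) by simp
          qed
          moreover have "u2 \<noteq> 0"
          proof
            assume "u2 = 0"
            then have "N dvd r' - v" unfolding u2_def by (simp only: dvd_eq_mod_eq_0)
            then have "r' = v" using vr r'r by (intro dvd_range_eq) auto
            then show False using vnr(2) by simp
          qed
          moreover have "u1 \<noteq> u2"
          proof
            assume "u1 = u2"
            then have "N dvd (r - v) - (r' - v)" unfolding u1_def u2_def by (simp only: mod_eq_dvd_iff)
            then have "N dvd r - r'" by simp
            then have "r = r'" using rr r'r by (intro dvd_range_eq) auto
            then show False using False by simp
          qed
          ultimately show False using nt u1H u2H P_zero[OF sg] by blast
        qed
      qed
      have B: "P (v + r) \<or> P (v - r)"
      proof (rule ccontr)
        assume "\<not> (P (v + r) \<or> P (v - r))"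
        then have "P (r - v)" "\<not> P (r + v)" "\<not> P (v - r)"
          using \<open>P (r - v) \<or> P (r + v)\<close> by (auto simp: add.commute)
        then show False using Pneg[of "r - v"] by simp
      qed
      show ?thesis using A B Pvr' adj vr rr r'r vnr vr0 vr'0 by auto
    qed
    show ?thesis using key sub rC r'C by blast
  qed
  have "perfect_code (integer_mod_group n) H C"
    unfolding perfect_code_def
  proof (intro conjI ballI)
    show "C \<subseteq> carrier (integer_mod_group n)" using n N_def by (auto simp: C_def carrier_integer_mod_group)
  next
    fix x y assume "x \<in> C" "y \<in> C" then show "\<not> sum_graph_adj (integer_mod_group n) H x y" by (rule indep)
  next
    fix v assume "v \<in> carrier (integer_mod_group n) - C"
    then show "\<exists>!c. c \<in> C \<and> sum_graph_adj (integer_mod_group n) H v c"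
      using uniq n N_def by (auto simp: carrier_integer_mod_group)
  qed
  then show ?thesis by blast
qed


lemma hyp_odd:
  assumes sg: "subgroup H (integer_mod_group n)" and odd: "odd n"
    and a: "(2*a) mod int n \<in> H"
  shows "\<exists>x. (x - a) mod int n \<in> H \<and> (2*x) mod int n = 0"
proof -
  have 1: "(int ((n+1) div 2) * (2*a)) mod int n \<in> H" by (rule P_nat_mult[OF sg a])
  have "int ((n+1) div 2) * 2 = int n + 1" using odd by (auto elim: oddE)
  then have "int ((n+1) div 2) * (2*a) = int n * a + a" by (metis mult.assoc distrib_right mult_1)
  then have "(int ((n+1) div 2) * (2*a)) mod int n = a mod int n" by simp
  then have "a mod int n \<in> H" using 1 by simp
  then have "(- a) mod int n \<in> H" by (rule P_neg[OF sg])
  then show ?thesis by (intro exI[of _ 0]) simp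
qed

lemma hyp_2odd:
  assumes sg: "subgroup H (integer_mod_group n)" and nd: "n = 2*d" and odd: "odd d"
    and a: "(2*a) mod int n \<in> H"
  shows "\<exists>x. (x - a) mod int n \<in> H \<and> (2*x) mod int n = 0"
proof -
  have 1: "(int ((d+1) div 2) * (2*a)) mod int n \<in> H" by (rule P_nat_mult[OF sg a])
  have "int ((d+1) div 2) * 2 = int d + 1" using odd by (auto elim: oddE)
  then have e: "int ((d+1) div 2) * (2*a) = int d * a + a" by (metis mult.assoc distrib_right mult_1)
  show ?thesis
  proof (cases "even a")
    case True
    then obtain b where b: "a = 2*b" by (auto elim: evenE)
    have "int d * a + a = int n * b + a" using nd b by simp
    then have "(int ((d+1) div 2) * (2*a)) mod int n = a mod int n" using e by simp
    then have "a mod int n \<in> H" using 1 by simp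
    then have "(- a) mod int n \<in> H" by (rule P_neg[OF sg])
    then show ?thesis by (intro exI[of _ 0]) simp
  next
    case False
    then obtain b where b: "a = 2*b + 1" by (auto elim: oddE)
    have "int d * a + a = int d + a + b * int n" using nd b by (simp add: algebra_simps)
    then have e2: "int ((d+1) div 2) * (2*a) = int d + a + b * int n" using e by linarith
    have "(int ((d+1) div 2) * (2*a)) mod int n = (int d + a) mod int n" by (simp only: e2 mod_mult_self1)
    then have "(int d + a) mod int n \<in> H" using 1 by simp
    then have 2: "(- (int d + a)) mod int n \<in> H" by (rule P_neg[OF sg])
    have e3: "- (int d + a) = (int d - a) + (-1) * int n" using nd by simp
    have "(- (int d + a)) mod int n = (int d - a) mod int n" by (simp only: e3 mod_mult_self1)
    then have "(int d - a) mod int n \<in> H" using 2 by simp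
    moreover have "(2 * int d) mod int n = 0" using nd by simp
    ultimately show ?thesis by (intro exI[of _ "int d"] conjI)
  qed
qed

lemma hyp_4:
  assumes sg: "subgroup H (integer_mod_group 4)"
  shows "(\<exists>x. (x - a) mod 4 \<in> H \<and> (2*x) mod 4 = 0) \<or> (\<forall>u\<in>H. \<forall>v\<in>H. \<forall>w\<in>H. u = v \<or> u = w \<or> v = w)"
proof (cases "1 \<in> H \<or> 3 \<in> H")
  case True
  have "1 \<in> H"
  proof (cases "1 \<in> H")
    case False
    then have "3 \<in> H" using True by simp
    then have "(3::int) mod int 4 \<in> H" by simp
    from P_neg[OF sg this] show ?thesis by simp
  qed simp
  then have h1: "(1::int) mod int 4 \<in> H" by simp
  have all: "y \<in> H" if "y \<in> {0..<4}" for y :: int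
  proof -
    have "(int (nat y) * 1) mod int 4 \<in> H" by (rule P_nat_mult[OF sg h1])
    then show ?thesis using that by simp
  qed
  have "(0 - a) mod 4 \<in> H" by (rule all) simp
  then show ?thesis by (intro disjI1 exI[of _ 0] conjI) simp_all
next
  case False
  have "H \<subseteq> {0..<4}" using subgroup.subset[OF sg] by (simp add: carrier_integer_mod_group)
  have "H \<subseteq> {0, 2}"
  proof
    fix x assume xH: "x \<in> H"
    have r: "0 \<le> x" "x < 4" using xH \<open>H \<subseteq> {0..<4}\<close> by auto
    have "x \<noteq> 1" "x \<noteq> 3" using False xH by auto
    then have "x = 0 \<or> x = 2" using r by presburger
    then show "x \<in> {0, 2}" by simp
  qed
  have 3: "u = v \<or> u = w \<or> v = w" if "u \<in> H" "v \<in> H" "w \<in> H" for u v w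
  proof -
    have "u \<in> {0,2}" "v \<in> {0,2}" "w \<in> {0,2}"
      using subsetD[OF \<open>H \<subseteq> {0, 2}\<close>] that by simp_all
    then show ?thesis by auto
  qed
  have "\<forall>u\<in>H. \<forall>v\<in>H. \<forall>w\<in>H. u = v \<or> u = w \<or> v = w" using 3 by (intro ballI)
  then show ?thesis by (rule disjI2)
qed

lemma mod_ne0:
  fixes s N :: int
  assumes "0 < s" "s < 2*N" "s \<noteq> N"
  shows "s mod N \<noteq> 0"
proof (cases "s < N")
  case True then show ?thesis using assms by simp
next
  case False
  have "(s - N + 1 * N) mod N = (s - N) mod N" by (rule mod_mult_self1)
  then have "s mod N = (s - N) mod N" by simp
  also have "\<dots> = s - N" using assms False by (intro mod_pos_pos_trivial) auto
  finally show ?thesis using assms False by simp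
qed

lemma even_mod_even:
  fixes s N :: int
  assumes "even N"
  shows "even (s mod N) \<longleftrightarrow> even s"
  using assms by (simp add: even_iff_mod_2_eq_zero mod_mod_cancel)


lemma nec:
  assumes n4: "4 dvd n" and n8: "n \<ge> 8"
  shows "\<not> code_perfect (integer_mod_group n)"
proof
  assume cp: "code_perfect (integer_mod_group n)"
  define N where "N = int n"
  define H where "H = {x \<in> {0..<N}. even x}"
  obtain k where k: "n = 4 * k" using n4 by (auto elim: dvdE)
  have N4: "4 dvd N" using k N_def by simp
  have evN: "even N" using N4 by presburger
  have N8: "N \<ge> 8" using n8 N_def by simp
  have car: "carrier (integer_mod_group n) = {0..<N}" using n8 N_def by (simp add: carrier_integer_mod_group)
  have modr: "x mod N \<in> {0..<N}" for x using N8 by simp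
  have sg: "subgroup H (integer_mod_group n)"
  proof (rule group.subgroupI[OF group_integer_mod_group])
    show "H \<subseteq> carrier (integer_mod_group n)" unfolding car H_def by (rule Collect_restrict)
    have "0 \<in> H" using N8 unfolding H_def by simp
    then show "H \<noteq> {}" by (intro notI) simp
  next
    fix a assume a: "a \<in> H"
    then have "a \<in> carrier (integer_mod_group n)" using car H_def by auto
    then have "inv\<^bsub>integer_mod_group n\<^esub> a = (-a) mod N" using N_def by simp
    moreover have "even ((-a) mod N)" using a H_def even_mod_even[OF evN] by simp
    ultimately show "inv\<^bsub>integer_mod_group n\<^esub> a \<in> H" using H_def modr by simp
  next
    fix a b assume a: "a \<in> H" and b: "b \<in> H"
    have "even ((a+b) mod N)" using a b H_def even_mod_even[OF evN] by simp
    then show "a \<otimes>\<^bsub>integer_mod_group n\<^esub> b \<in> H" using H_def modr N_def by simp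
  qed
  have "H \<lhd> integer_mod_group n"
    by (rule comm_group.subgroup_imp_normal[OF abelian_integer_mod_group sg])
  then obtain C where pc: "perfect_code (integer_mod_group n) H C"
    using cp unfolding code_perfect_def by blast
  have adj: "sum_graph_adj (integer_mod_group n) H x y \<longleftrightarrow>
      x \<in> {0..<N} \<and> y \<in> {0..<N} \<and> x \<noteq> y \<and> even (x+y) \<and> (x+y) mod N \<noteq> 0" for x y
  proof -
    have "(x+y) mod N \<in> H \<longleftrightarrow> even (x+y)" using H_def modr even_mod_even[OF evN] by simp
    then show ?thesis using adj_iff[of n H x y] n8 N_def by simp
  qed
  have Csub: "C \<subseteq> {0..<N}" using pc car unfolding perfect_code_def by simp
  have indep: "\<not> sum_graph_adj (integer_mod_group n) H x y" if "x \<in> C" "y \<in> C" for x y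
    using pc that unfolding perfect_code_def by simp
  have uniq: "\<exists>!c. c \<in> C \<and> sum_graph_adj (integer_mod_group n) H v c" if "v \<in> {0..<N}" "v \<notin> C" for v
    using pc that car unfolding perfect_code_def by simp
  have F: "x + y = N" if "x \<in> C" "y \<in> C" "odd x" "odd y" "x \<noteq> y" for x y
  proof (rule ccontr)
    assume ne: "x + y \<noteq> N"
    have r: "x \<in> {0..<N}" "y \<in> {0..<N}" using that Csub by auto
    have "0 < x" "0 < y" using r that(3,4) by (auto intro!: order.not_eq_order_implies_strict)
    then have "(x+y) mod N \<noteq> 0" using r ne by (intro mod_ne0) auto
    moreover have "even (x+y)" using that(3,4) by simp
    ultimately have "sum_graph_adj (integer_mod_group n) H x y" using adj r that(5) by simp
    then show False using indep that(1,2) by simp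
  qed
  obtain c where cC: "c \<in> C" and oc: "odd c"
  proof (cases "1 \<in> C")
    case True then show ?thesis using that by simp
  next
    case False
    have "(1::int) \<in> {0..<N}" using N8 by simp
    then obtain c where "c \<in> C" "sum_graph_adj (integer_mod_group n) H 1 c"
      using uniq False by blast
    then show ?thesis using that adj by simp
  qed
  have cr: "c \<in> {0..<N}" using cC Csub by auto
  have c0: "0 < c" using cr oc by (auto intro!: order.not_eq_order_implies_strict)
  define c' where "c' = N - c"
  have c'r: "c' \<in> {0..<N}" using cr c0 c'_def by simp
  have oc': "odd c'" using oc evN c'_def by simp
  have cc': "c \<noteq> c'"
  proof
    assume "c = c'"
    then have "c + c = N" using c'_def by simp
    then have "even c" using N4 by presburger
    then show False using oc by simp
  qed
  have c'C: "c' \<in> C"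
  proof (rule ccontr)
    assume nC: "c' \<notin> C"
    then obtain c2 where c2: "c2 \<in> C" "sum_graph_adj (integer_mod_group n) H c' c2"
      using uniq c'r by blast
    have c2p: "c2 \<in> {0..<N}" "c' \<noteq> c2" "even (c' + c2)" "(c' + c2) mod N \<noteq> 0" using c2(2) adj by auto
    have oc2: "odd c2" using c2p(3) oc' by simp
    have "c2 \<noteq> c" using c2p(4) c'_def by auto
    then have "c + c2 = N" using F[OF cC c2(1) oc oc2] by simp
    then have "c2 = c'" using c'_def by simp
    then show False using c2p(2) by simp
  qed
  obtain z where z: "z \<in> {1,3,5}" "z \<noteq> c" "z \<noteq> c'"
  proof -
    have "\<exists>z\<in>{1::int,3,5}. z \<noteq> c \<and> z \<noteq> c'" by auto
    then show ?thesis using that by blast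
  qed
  have zr: "z \<in> {0..<N}" using z(1) N8 by auto
  have oz: "odd z" using z(1) by auto
  have z0: "0 < z" using z(1) by auto
  have zC: "z \<notin> C"
  proof
    assume "z \<in> C"
    then have "z + c = N" using F[OF _ cC oz oc z(2)] by simp
    then show False using z(3) c'_def by simp
  qed
  have a1: "sum_graph_adj (integer_mod_group n) H z c"
  proof -
    have "(z + c) mod N \<noteq> 0" using zr cr z0 c0 z(3) c'_def by (intro mod_ne0) auto
    then show ?thesis using adj zr cr z(2) oz oc by simp
  qed
  have a2: "sum_graph_adj (integer_mod_group n) H z c'"
  proof -
    have "(z + c') mod N \<noteq> 0" using zr c'r z0 z(2) c'_def cr c0 by (intro mod_ne0) auto
    then show ?thesis using adj zr c'r z(3) oz oc' by simp
  qed
  from uniq[OF zr zC] have "\<exists>!c. c \<in> C \<and> sum_graph_adj (integer_mod_group n) H z c" .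
  then show False using a1 a2 cC c'C cc' by blast
qed

theorem corollary4p6:
  fixes n :: nat
  assumes "n \<ge> 1"
  shows "code_perfect (integer_mod_group n) \<longleftrightarrow>
         odd n \<or> (\<exists>d. n = 2 * d \<and> (d = 2 \<or> odd d))"
proof
  assume cp: "code_perfect (integer_mod_group n)"
  show "odd n \<or> (\<exists>d. n = 2 * d \<and> (d = 2 \<or> odd d))"
  proof (rule ccontr)
    assume nc: "\<not> (odd n \<or> (\<exists>d. n = 2 * d \<and> (d = 2 \<or> odd d)))"
    then have ev: "even n" by simp
    have "\<not> (n div 2 = 2 \<or> odd (n div 2))" using nc ev by (metis dvd_mult_div_cancel)
    then have "4 dvd n" "n \<ge> 8" using ev assms by presburger+
    then show False using nec cp by blast
  qed
next
  assume cond: "odd n \<or> (\<exists>d. n = 2 * d \<and> (d = 2 \<or> odd d))"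
  show "code_perfect (integer_mod_group n)"
    unfolding code_perfect_def
  proof (intro allI impI)
    fix H assume "H \<lhd> integer_mod_group n"
    then have sg: "subgroup H (integer_mod_group n)" by (rule normal_imp_subgroup)
    show "\<exists>C. perfect_code (integer_mod_group n) H C"
    proof (rule suff[OF assms sg])
      fix a assume a: "(2*a) mod int n \<in> H"
      show "(\<exists>x. (x - a) mod int n \<in> H \<and> (2*x) mod int n = 0) \<or> (\<forall>u\<in>H. \<forall>v\<in>H. \<forall>w\<in>H. u = v \<or> u = w \<or> v = w)"
      proof (cases "odd n")
        case True show ?thesis using hyp_odd[OF sg True a] by (rule disjI1)
      next
        case False
        then obtain d where d: "n = 2 * d" "d = 2 \<or> odd d" using cond by blast
        show ?thesis
        proof (cases "d = 2")
          case True
          then have n4: "n = 4" using d by simp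
          show ?thesis using hyp_4[of H a] sg n4 by simp
        next
          case False
          have od: "odd d" using d False by simp
          show ?thesis using hyp_2odd[OF sg d(1) od a] by (rule disjI1)
        qed
      qed
    qed
  qed
qed

end
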